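(* Let $K=\langle a,b,s\mid sas^{-1}=ab,\ sbs^{-1}=b\rangle$ and $L=\langle c,q\mid c(qcq^{-1})=(qcq^{-1})c\rangle$ (these groups are isomorphic via $a\mapsto cq^{-1}$, $b\mapsto qcq^{-1}c^{-1}$, $s\mapsto c$). For $i\in\mathbb{Z}$ let $c_i=q^icq^{-i}\in L$. Then: (1) $C_L(c_i)=\langle c_{i-1},c_i,c_{i+1}\rangle$ for every $i\in\mathbb{Z}$; (2) $C_K(s)=\langle aba^{-1},b,s\rangle$.
   Context: $C_G(g)$ denotes the centraliser of $g$ in $G$. *)

theory Defs
  imports "HOL-Algebra.Algebra"
begin

(* Words over a generating alphabet 'g: a letter (x, False) is x, (x, True) is x^{-1}. *)
type_synonym 'g word = "('g \<times> bool) list"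

inductive pres_eqv :: "('g word \<times> 'g word) set \<Rightarrow> 'g word \<Rightarrow> 'g word \<Rightarrow> bool"
  for R where
  refl: "pres_eqv R w w"
| sym: "pres_eqv R u v \<Longrightarrow> pres_eqv R v u"
| trans: "pres_eqv R u v \<Longrightarrow> pres_eqv R v w \<Longrightarrow> pres_eqv R u w"
| cancel: "pres_eqv R (u @ [(x, b), (x, \<not> b)] @ v) (u @ v)"
| rel: "(l, r) \<in> R \<Longrightarrow> pres_eqv R (u @ l @ v) (u @ r @ v)"

definition wclass :: "('g word \<times> 'g word) set \<Rightarrow> 'g word \<Rightarrow> 'g word set" where
  "wclass R w = {v. pres_eqv R w v}"

definition pres_mult :: "('g word \<times> 'g word) set \<Rightarrow> 'g word set \<Rightarrow> 'g word set \<Rightarrow> 'g word set" where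
  "pres_mult R U W = {v. \<exists>x\<in>U. \<exists>z\<in>W. pres_eqv R (x @ z) v}"

definition pres_group :: "('g word \<times> 'g word) set \<Rightarrow> 'g word set monoid" where
  "pres_group R = \<lparr> carrier = {wclass R w | w. True},
                    monoid.mult = pres_mult R,
                    monoid.one = wclass R [] \<rparr>"

definition gen :: "('g word \<times> 'g word) set \<Rightarrow> 'g \<Rightarrow> 'g word set" where
  "gen R x = wclass R [(x, False)]"

definition centraliser :: "('a, 'b) monoid_scheme \<Rightarrow> 'a \<Rightarrow> 'a set" where
  "centraliser G g = {h \<in> carrier G. h \<otimes>\<^bsub>G\<^esub> g = g \<otimes>\<^bsub>G\<^esub> h}"

datatype Kgen = Ka | Kb | Ks

definition K_rels :: "(Kgen word \<times> Kgen word) set" where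
  "K_rels = {([(Ks, False), (Ka, False), (Ks, True)], [(Ka, False), (Kb, False)]),
             ([(Ks, False), (Kb, False), (Ks, True)], [(Kb, False)])}"

definition K_grp :: "Kgen word set monoid" where "K_grp = pres_group K_rels"

datatype Lgen = Lc | Lq

definition L_rels :: "(Lgen word \<times> Lgen word) set" where
  "L_rels = {([(Lc, False), (Lq, False), (Lc, False), (Lq, True)],
              [(Lq, False), (Lc, False), (Lq, True), (Lc, False)])}"

definition L_grp :: "Lgen word set monoid" where "L_grp = pres_group L_rels"

definition c_el :: "int \<Rightarrow> Lgen word set" where
  "c_el i = (gen L_rels Lq [^]\<^bsub>L_grp\<^esub> i) \<otimes>\<^bsub>L_grp\<^esub> gen L_rels Lc
            \<otimes>\<^bsub>L_grp\<^esub> (gen L_rels Lq [^]\<^bsub>L_grp\<^esub> (- i))"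

end

theory Submission
  imports Defs
begin



section \<open>Presentation infrastructure\<close>

lemma pres_eqv_ctx: "pres_eqv R u v \<Longrightarrow> pres_eqv R (p @ u @ q) (p @ v @ q)"
proof (induction rule: pres_eqv.induct)
  case (refl w) then show ?case by (rule pres_eqv.refl)
next
  case (sym u v) then show ?case by (simp add: pres_eqv.sym)
next
  case (trans u v w) then show ?case by (metis pres_eqv.trans)
next
  case (cancel u x b v)
  have "pres_eqv R ((p @ u) @ [(x, b), (x, \<not> b)] @ (v @ q)) ((p @ u) @ (v @ q))"
    by (rule pres_eqv.cancel)
  then show ?case by simp
next
  case (rel l r u v)
  have "pres_eqv R ((p @ u) @ l @ (v @ q)) ((p @ u) @ r @ (v @ q))"
    by (rule pres_eqv.rel[OF rel])
  then show ?case by simp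
qed

lemma pres_eqv_app: "pres_eqv R u u' \<Longrightarrow> pres_eqv R v v' \<Longrightarrow> pres_eqv R (u @ v) (u' @ v')"
proof -
  assume a: "pres_eqv R u u'" "pres_eqv R v v'"
  have "pres_eqv R ([] @ u @ v) ([] @ u' @ v)" by (rule pres_eqv_ctx[OF a(1)])
  moreover have "pres_eqv R (u' @ v @ []) (u' @ v' @ [])" by (rule pres_eqv_ctx[OF a(2)])
  ultimately show ?thesis by (auto intro: pres_eqv.trans)
qed

lemma wclass_eq_iff: "wclass R u = wclass R v \<longleftrightarrow> pres_eqv R u v"
  unfolding wclass_def
  by (auto intro: pres_eqv.refl pres_eqv.sym pres_eqv.trans)

lemma pres_mult_wclass: "pres_mult R (wclass R u) (wclass R v) = wclass R (u @ v)"
  unfolding pres_mult_def wclass_def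
  by (auto intro: pres_eqv.refl pres_eqv.sym pres_eqv.trans pres_eqv_app)

definition winv :: "'g word \<Rightarrow> 'g word" where
  "winv w = rev (map (\<lambda>(x, b). (x, \<not> b)) w)"

lemma winv_simps [simp]: "winv [] = []" "winv (t # w) = winv w @ [(fst t, \<not> snd t)]"
  by (auto simp: winv_def split: prod.splits)

lemma winv_l: "pres_eqv R (winv w @ w) []"
proof (induction w)
  case Nil then show ?case by (simp add: pres_eqv.refl)
next
  case (Cons t w)
  obtain x b where t: "t = (x, b)" by force
  have "pres_eqv R (winv w @ [(x, \<not> b), (x, \<not> \<not> b)] @ w) (winv w @ w)"
    by (rule pres_eqv.cancel)
  then show ?case using Cons t by (auto intro: pres_eqv.trans)
qed

lemma pres_group_carrier: "carrier (pres_group R) = range (wclass R)"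
  by (auto simp: pres_group_def)

lemma pres_group_mult: "wclass R u \<otimes>\<^bsub>pres_group R\<^esub> wclass R v = wclass R (u @ v)"
  by (simp add: pres_group_def pres_mult_wclass)

lemma pres_group_one: "\<one>\<^bsub>pres_group R\<^esub> = wclass R []"
  by (simp add: pres_group_def)

lemma pres_group_is_group: "group (pres_group R)"
proof (rule groupI)
  fix x y assume "x \<in> carrier (pres_group R)" "y \<in> carrier (pres_group R)"
  then show "x \<otimes>\<^bsub>pres_group R\<^esub> y \<in> carrier (pres_group R)"
    by (auto simp: pres_group_carrier pres_group_mult)
next
  show "\<one>\<^bsub>pres_group R\<^esub> \<in> carrier (pres_group R)"
    by (auto simp: pres_group_carrier pres_group_one)
next
  fix x y z assume "x \<in> carrier (pres_group R)" "y \<in> carrier (pres_group R)" "z \<in> carrier (pres_group R)"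
  then show "x \<otimes>\<^bsub>pres_group R\<^esub> y \<otimes>\<^bsub>pres_group R\<^esub> z = x \<otimes>\<^bsub>pres_group R\<^esub> (y \<otimes>\<^bsub>pres_group R\<^esub> z)"
    by (auto simp: pres_group_carrier pres_group_mult)
next
  fix x assume "x \<in> carrier (pres_group R)"
  then show "\<one>\<^bsub>pres_group R\<^esub> \<otimes>\<^bsub>pres_group R\<^esub> x = x"
    by (auto simp: pres_group_carrier pres_group_mult pres_group_one)
next
  fix x assume "x \<in> carrier (pres_group R)"
  then obtain w where x: "x = wclass R w" by (auto simp: pres_group_carrier)
  show "\<exists>y\<in>carrier (pres_group R). y \<otimes>\<^bsub>pres_group R\<^esub> x = \<one>\<^bsub>pres_group R\<^esub>"
    by (rule bexI[of _ "wclass R (winv w)"])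
       (auto simp: x pres_group_carrier pres_group_mult pres_group_one wclass_eq_iff winv_l)
qed

lemma wclass_in_carrier [simp]: "wclass R w \<in> carrier (pres_group R)"
  by (simp add: pres_group_carrier)

lemma gen_in_carrier [simp]: "gen R x \<in> carrier (pres_group R)"
  by (simp add: gen_def)

lemma wclass_inv_letter[simp]: "wclass R [(x, True)] = inv\<^bsub>pres_group R\<^esub> (gen R x)"
proof -
  interpret group "pres_group R" by (rule pres_group_is_group)
  have "wclass R [(x, True)] \<otimes>\<^bsub>pres_group R\<^esub> gen R x = \<one>\<^bsub>pres_group R\<^esub>"
    using winv_l[of R "[(x,False)]"]
    by (simp add: gen_def pres_group_mult pres_group_one wclass_eq_iff)
  then show ?thesis by (intro inv_equality[symmetric]) auto
qed

lemma wclass_Cons: "wclass R (t # w) =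
   (if snd t then inv\<^bsub>pres_group R\<^esub> (gen R (fst t)) else gen R (fst t)) \<otimes>\<^bsub>pres_group R\<^esub> wclass R w"
proof -
  have "wclass R (t # w) = wclass R [t] \<otimes>\<^bsub>pres_group R\<^esub> wclass R w"
    by (simp add: pres_group_mult)
  then show ?thesis
    apply (cases t)
    apply (rename_tac a b)
    apply (case_tac b)
     apply (simp only: wclass_inv_letter fst_conv snd_conv if_True)
    apply (simp add: gen_def)
    done
qed

definition actw :: "('g \<times> bool \<Rightarrow> 'x \<Rightarrow> 'x) \<Rightarrow> 'g word \<Rightarrow> 'x \<Rightarrow> 'x" where
  "actw f w x = foldr f w x"

lemma actw_simps [simp]: "actw f [] x = x" "actw f (t # w) x = f t (actw f w x)"
  "actw f (u @ v) x = actw f u (actw f v x)"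
  by (simp_all add: actw_def)

lemma actw_P: assumes "\<And>t x. P x \<Longrightarrow> P (f t x)" shows "P x \<Longrightarrow> P (actw f w x)"
  by (induction w) (auto intro: assms)

lemma actw_wd:
  assumes pres: "\<And>t x. P x \<Longrightarrow> P (f t x)"
    and canc: "\<And>g b x. P x \<Longrightarrow> f (g, b) (f (g, \<not> b) x) = x"
    and rels: "\<And>l r x. (l, r) \<in> R \<Longrightarrow> P x \<Longrightarrow> actw f l x = actw f r x"
  shows "pres_eqv R u v \<Longrightarrow> P x \<Longrightarrow> actw f u x = actw f v x"
proof (induction arbitrary: x rule: pres_eqv.induct)
  case (cancel u g b v)
  have "P (actw f v x)" using actw_P[of P f, OF pres] cancel by blast
  then show ?case by (simp add: canc)
next
  case (rel l r u v)
  have "P (actw f v x)" using actw_P[of P f, OF pres] rel(2) by blast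
  then show ?case using rels[OF rel(1)] by simp
qed auto

definition gact :: "('g word \<times> 'g word) set \<Rightarrow> ('g \<times> bool \<Rightarrow> 'x \<Rightarrow> 'x) \<Rightarrow> 'g word set \<Rightarrow> 'x \<Rightarrow> 'x" where
  "gact R f g x = actw f (SOME w. g = wclass R w) x"

lemma gact_wclass:
  assumes pres: "\<And>t x. P x \<Longrightarrow> P (f t x)"
    and canc: "\<And>g b x. P x \<Longrightarrow> f (g, b) (f (g, \<not> b) x) = x"
    and rels: "\<And>l r x. (l, r) \<in> R \<Longrightarrow> P x \<Longrightarrow> actw f l x = actw f r x"
    and "P x"
  shows "gact R f (wclass R w) x = actw f w x"
proof -
  have "wclass R w = wclass R (SOME v. wclass R w = wclass R v)" by (rule someI_ex) blast
  then have "pres_eqv R (SOME v. wclass R w = wclass R v) w"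
    by (simp add: wclass_eq_iff pres_eqv.sym)
  from actw_wd[OF pres canc rels this \<open>P x\<close>] show ?thesis unfolding gact_def by simp
qed




section \<open>Syllable model of F(a,b) x Z\<close>

type_synonym fel = "int \<times> (bool \<times> int) list"
type_synonym xel = "fel \<times> int"

fun red_l :: "(bool \<times> int) list \<Rightarrow> bool" where
  "red_l [] = True"
| "red_l [_] = True"
| "red_l ((e, m) # (e', m') # L) = ((e \<noteq> e' \<longrightarrow> m \<noteq> 0) \<and> red_l ((e', m') # L))"

definition redX :: "xel \<Rightarrow> bool" where "redX x = red_l (snd (fst x))"

definition bm :: "int \<Rightarrow> fel \<Rightarrow> fel" where "bm n u = (fst u + n, snd u)"

fun am :: "bool \<Rightarrow> fel \<Rightarrow> fel" where
  "am e (m, []) = (0, [(e, m)])"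
| "am e (m, (e', m') # L) = (if m = 0 \<and> e' \<noteq> e then (m', L) else (0, (e, m) # (e', m') # L))"

lemma red_l_tl: "red_l (x # L) \<Longrightarrow> red_l L"
  by (cases x; cases L) auto

lemma am_red: "red_l (snd u) \<Longrightarrow> red_l (snd (am e u))"
  by (cases u; cases "snd u") (auto dest: red_l_tl)

lemma am_inv: "red_l (snd u) \<Longrightarrow> am (\<not> e) (am e u) = u"
proof (cases u)
  case (Pair m L)
  assume r: "red_l (snd u)"
  show ?thesis
  proof (cases L)
    case Nil then show ?thesis using Pair by simp
  next
    case (Cons y L')
    obtain e' m' where y: "y = (e', m')" by force
    show ?thesis
    proof (cases "m = 0 \<and> e' \<noteq> e")
      case True
      then have e': "e' = (\<not> e)" by auto
      show ?thesis
      proof (cases L')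
        case Nil then show ?thesis using Pair Cons y True e' by simp
      next
        case (Cons z L'')
        obtain e'' m'' where z: "z = (e'', m'')" by force
        show ?thesis using r Pair \<open>L = y # L'\<close> y Cons z True e' by auto
      qed
    next
      case False
      then show ?thesis using Pair Cons y by auto
    qed
  qed
qed

lemma am_noc: "red_l ((e, m) # L) \<Longrightarrow> am e (m, L) = (0, (e, m) # L)"
  by (cases L) auto

definition xa :: "xel \<Rightarrow> xel" where "xa x = (am True (bm (- snd x) (fst x)), snd x)"
definition xai :: "xel \<Rightarrow> xel" where "xai x = (bm (snd x) (am False (fst x)), snd x)"
definition xb :: "xel \<Rightarrow> xel" where "xb x = (bm 1 (fst x), snd x)"
definition xbi :: "xel \<Rightarrow> xel" where "xbi x = (bm (-1) (fst x), snd x)"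
definition xs :: "xel \<Rightarrow> xel" where "xs x = (fst x, snd x + 1)"
definition xsi :: "xel \<Rightarrow> xel" where "xsi x = (fst x, snd x - 1)"

lemmas xdefs = xa_def xai_def xb_def xbi_def xs_def xsi_def

lemma bm_snd [simp]: "snd (bm n u) = snd u" by (simp add: bm_def)
lemma bm_bm [simp]: "bm n (bm m u) = bm (m + n) u" by (simp add: bm_def add.assoc)
lemma bm_0 [simp]: "bm 0 u = u" by (simp add: bm_def)

lemma x_red: "redX x \<Longrightarrow> redX (xa x)" "redX x \<Longrightarrow> redX (xai x)" "redX x \<Longrightarrow> redX (xb x)"
  "redX x \<Longrightarrow> redX (xbi x)" "redX x \<Longrightarrow> redX (xs x)" "redX x \<Longrightarrow> redX (xsi x)"
  by (auto simp: xdefs redX_def intro: am_red)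

lemma x_inv: "redX x \<Longrightarrow> xa (xai x) = x" "redX x \<Longrightarrow> xai (xa x) = x"
  "xb (xbi x) = x" "xbi (xb x) = x" "xs (xsi x) = x" "xsi (xs x) = x"
proof -
  assume "redX x"
  then have r: "red_l (snd (fst x))" by (simp add: redX_def)
  have r2: "red_l (snd (bm (- snd x) (fst x)))" using r by simp
  have r3: "red_l (snd (am False (fst x)))" using r by (rule am_red)
  show "xa (xai x) = x" using am_inv[OF r, of False] r3 by (simp add: xdefs)
  show "xai (xa x) = x" using am_inv[OF r2, of True]
    by (simp add: xdefs)
qed (auto simp: xdefs bm_def)




declare pow_nat [simp del]


lemma (in group) inv_cancel_simps [simp]:
  "x \<in> carrier G \<Longrightarrow> y \<in> carrier G \<Longrightarrow> x \<otimes> (inv x \<otimes> y) = y"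
  "x \<in> carrier G \<Longrightarrow> y \<in> carrier G \<Longrightarrow> inv x \<otimes> (x \<otimes> y) = y"
  by (simp_all add: m_assoc[symmetric])

lemma (in group) comm_inv_left:
  assumes "a \<in> carrier G" "y \<in> carrier G" "a \<otimes> y = y \<otimes> a"
  shows "inv a \<otimes> y = y \<otimes> inv a"
proof -
  have "inv a \<otimes> y = inv a \<otimes> (y \<otimes> a) \<otimes> inv a" using assms(1,2) by (simp add: m_assoc)
  also have "\<dots> = inv a \<otimes> (a \<otimes> y) \<otimes> inv a" using assms by simp
  also have "\<dots> = y \<otimes> inv a" using assms(1,2) by (simp add: m_assoc)
  finally show ?thesis .
qed

lemma (in group) comm_int_pow:
  assumes "x \<in> carrier G" "y \<in> carrier G" "x \<otimes> y = y \<otimes> x"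
  shows "x [^] (i::int) \<otimes> y = y \<otimes> x [^] i"
proof -
  have n: "x [^] (n::nat) \<otimes> y = y \<otimes> x [^] n" for n
    by (rule group_commutes_pow[OF assms(3,1,2)])
  show ?thesis
  proof (cases "i < 0")
    case True
    have c: "inv (x [^] nat (- i)) \<otimes> y = y \<otimes> inv (x [^] nat (- i))"
      using nat_pow_closed[OF assms(1)] assms(2) n by (rule comm_inv_left)
    have e: "x [^] i = inv (x [^] nat (- i))" using True by (simp add: int_pow_def2)
    show ?thesis unfolding e by (rule c)
  next
    case False
    have e: "x [^] i = x [^] nat i" using False by (simp add: int_pow_def2)
    show ?thesis unfolding e by (rule n)
  qed
qed

lemma (in group) conj_int_pow:
  assumes "g \<in> carrier G" "x \<in> carrier G"
  shows "(g \<otimes> x \<otimes> inv g) [^] (i::int) = g \<otimes> x [^] i \<otimes> inv g"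
proof -
  have n: "(g \<otimes> x \<otimes> inv g) [^] (n::nat) = g \<otimes> x [^] n \<otimes> inv g" for n
  proof (induction n)
    case 0 then show ?case using assms by simp
  next
    case (Suc n)
    have "(g \<otimes> x \<otimes> inv g) [^] Suc n = g \<otimes> x [^] n \<otimes> inv g \<otimes> (g \<otimes> x \<otimes> inv g)"
      using Suc by simp
    also have "\<dots> = g \<otimes> (x [^] n \<otimes> x) \<otimes> inv g" using assms by (simp add: m_assoc)
    finally show ?case by simp
  qed
  show ?thesis
  proof (cases "i < 0")
    case True
    have e1: "(g \<otimes> x \<otimes> inv g) [^] i = inv ((g \<otimes> x \<otimes> inv g) [^] nat (- i))" using True by (simp add: int_pow_def2)
    have e2: "x [^] i = inv (x [^] nat (- i))" using True by (simp add: int_pow_def2)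
    have "inv (g \<otimes> x [^] nat (- i) \<otimes> inv g) = g \<otimes> inv (x [^] nat (- i)) \<otimes> inv g"
      using assms by (simp add: inv_mult_group m_assoc)
    then show ?thesis unfolding e1 e2 n .
  next
    case False then show ?thesis by (simp add: int_pow_def2 n)
  qed
qed

lemma (in group) centraliser_subgroup:
  assumes "g \<in> carrier G" shows "subgroup (centraliser G g) G"
  proof (rule subgroupI)
    show "centraliser G g \<subseteq> carrier G" by (auto simp: centraliser_def)
  next
    show "centraliser G g \<noteq> {}" using assms by (auto simp: centraliser_def intro!: exI[of _ "\<one>"])
  next
    fix a assume a: "a \<in> centraliser G g"
    have ac: "a \<in> carrier G" "a \<otimes> g = g \<otimes> a" using a by (auto simp: centraliser_def)
    have "inv a \<otimes> g = g \<otimes> inv a" by (rule comm_inv_left[OF ac(1) assms(1) ac(2)])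
    then show "inv a \<in> centraliser G g" using ac(1) unfolding centraliser_def by simp
  next
    fix a b assume a: "a \<in> centraliser G g" and b: "b \<in> centraliser G g"
    have ac: "a \<in> carrier G" "a \<otimes> g = g \<otimes> a" using a by (auto simp: centraliser_def)
    have bc: "b \<in> carrier G" "b \<otimes> g = g \<otimes> b" using b by (auto simp: centraliser_def)
    have "a \<otimes> b \<otimes> g = a \<otimes> (b \<otimes> g)" using ac(1) bc(1) assms(1) by (simp add: m_assoc)
    also have "\<dots> = a \<otimes> (g \<otimes> b)" using bc by simp
    also have "\<dots> = (a \<otimes> g) \<otimes> b" using ac(1) bc(1) assms(1) by (simp add: m_assoc)
    also have "\<dots> = g \<otimes> a \<otimes> b" using ac by simp
    also have "\<dots> = g \<otimes> (a \<otimes> b)" using ac(1) bc(1) assms(1) by (simp add: m_assoc)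
    finally have "a \<otimes> b \<otimes> g = g \<otimes> (a \<otimes> b)" .
    then show "a \<otimes> b \<in> centraliser G g" using ac(1) bc(1) unfolding centraliser_def by simp
  qed



fun hn :: "(bool \<times> int) list \<Rightarrow> int" where
  "hn [] = 0"
| "hn ((e, m) # L) = (if e then 0 else 1)"

fun psiL :: "(bool \<times> int) list \<Rightarrow> (bool \<times> int) list" where
  "psiL [] = []"
| "psiL ((e, m) # L) = (e, m + hn L - (if e then 1 else 0)) # psiL L"

fun altL :: "(bool \<times> int) list \<Rightarrow> bool" where
  "altL [] = True"
| "altL [_] = False"
| "altL (x # y # zs) = (fst x \<and> \<not> fst y \<and> altL zs)"

lemma hn_psiL: "hn (psiL L) = hn L"
  by (cases L) auto

lemma psiL_red: "red_l L \<Longrightarrow> red_l (psiL L)"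
proof (induction L rule: induct_list012)
  case (3 x y zs)
  obtain e m where x: "x = (e, m)" by force
  obtain e' m' where y: "y = (e', m')" by force
  have r: "red_l (psiL (y # zs))" using 3 by (auto dest: red_l_tl)
  have c: "e \<noteq> e' \<longrightarrow> m \<noteq> 0" using 3(3) x y by simp
  define r' where "r' = psiL zs"
  have p: "psiL (x # y # zs) = (e, m + (if e' then 0 else 1) - (if e then 1 else 0)) # (e', m' + hn zs - (if e' then 1 else 0)) # r'"
    by (simp add: x y r'_def)
  have t: "red_l ((e', m' + hn zs - (if e' then 1 else 0)) # r')" using r by (simp add: y r'_def)
  show ?case unfolding p red_l.simps(3) using c t by (cases e; cases e') auto
next
  case 1 show ?case by simp
next
  case (2 x) show ?case by (cases x) simp
qed


lemma psiL_fix_alt: "hn L = 0 \<Longrightarrow> psiL L = L \<Longrightarrow> altL L"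
proof (induction L rule: induct_list012)
  case 1 show ?case by simp
next
  case (2 x) then show ?case by (cases x) (simp split: if_splits)
next
  case (3 x y zs)
  obtain e m where x: "x = (e, m)" by force
  obtain e' m' where y: "y = (e', m')" by force
  have e: "e" using 3(3) x by (simp split: if_splits)
  have p1: "psiL (x # y # zs) = (e, m + hn (y # zs) - 1) # psiL (y # zs)" using x e by simp
  have "hn (y # zs) = 1" using 3(4) unfolding p1 using x by simp
  then have e': "\<not> e'" using y by (simp split: if_splits)
  have p2: "psiL (y # zs) = (e', m' + hn zs) # psiL zs" using y e' by simp
  have "psiL zs = zs" "hn zs = 0" using 3(4) unfolding p1 p2 using y by simp_all
  then have "altL zs" using 3(1) by simp
  then show ?case using x y e e' by simp
qed




lemma (in group) assoc_lift:
  "a \<otimes> b = c \<Longrightarrow> a \<in> carrier G \<Longrightarrow> b \<in> carrier G \<Longrightarrow> z \<in> carrier G \<Longrightarrow> a \<otimes> (b \<otimes> z) = c \<otimes> z"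
  by (simp add: m_assoc[symmetric])

locale kmodel = group +
  fixes A B S :: 'a and act :: "'a \<Rightarrow> xel \<Rightarrow> xel"
  assumes A_c [simp]: "A \<in> carrier G" and B_c [simp]: "B \<in> carrier G" and S_c [simp]: "S \<in> carrier G"
    and rel1: "S \<otimes> A = A \<otimes> B \<otimes> S" and rel2: "S \<otimes> B = B \<otimes> S"
    and act_mult: "g \<in> carrier G \<Longrightarrow> h \<in> carrier G \<Longrightarrow> redX x \<Longrightarrow> act (g \<otimes> h) x = act g (act h x)"
    and act_red: "g \<in> carrier G \<Longrightarrow> redX x \<Longrightarrow> redX (act g x)"
    and act_one: "redX x \<Longrightarrow> act \<one> x = x"
    and act_A: "redX x \<Longrightarrow> act A x = xa x"
    and act_B: "redX x \<Longrightarrow> act B x = xb x"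
    and act_S: "redX x \<Longrightarrow> act S x = xs x"
begin

definition Ae :: "bool \<Rightarrow> 'a" where "Ae e = (if e then A else inv A)"

lemma Ae_c [simp]: "Ae e \<in> carrier G" by (simp add: Ae_def)

fun W :: "fel \<Rightarrow> 'a" where
  "W (m, []) = B [^] m"
| "W (m, (e, m') # L) = B [^] m \<otimes> Ae e \<otimes> W (m', L)"

lemma W_c [simp]: "W u \<in> carrier G"
  by (induction u rule: W.induct) auto

definition elem :: "xel \<Rightarrow> 'a" where "elem x = S [^] snd x \<otimes> W (fst x)"

lemma elem_c [simp]: "elem x \<in> carrier G" by (simp add: elem_def)

lemma W_bm: "W (bm n u) = B [^] n \<otimes> W u"
proof (cases u)
  case (Pair m L)
  have p: "B [^] (m + n) = B [^] n \<otimes> B [^] m" using int_pow_mult[of B n m] by (simp add: add.commute)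
  show ?thesis using p by (cases L) (auto simp: Pair bm_def m_assoc)
qed

lemma W_am: "W (am e u) = Ae e \<otimes> W u"
proof (cases u)
  case (Pair m L)
  show ?thesis
  proof (cases L)
    case Nil then show ?thesis using Pair by simp
  next
    case (Cons y L')
    obtain e' m' where y: "y = (e', m')" by force
    show ?thesis
    proof (cases "m = 0 \<and> e' \<noteq> e")
      case True
      then have "Ae e \<otimes> Ae e' = \<one>" by (auto simp: Ae_def)
      then show ?thesis using True Pair Cons y by (simp add: m_assoc[symmetric])
    next
      case False
      then show ?thesis using Pair Cons y by (auto simp: m_assoc)
    qed
  qed
qed

lemma invB_SB: "inv B \<otimes> S = S \<otimes> inv B"
  by (rule comm_inv_left) (simp_all add: rel2)

lemma d1: "A \<otimes> S = S \<otimes> A \<otimes> inv B"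
proof -
  have "S \<otimes> A \<otimes> inv B = A \<otimes> B \<otimes> (S \<otimes> inv B)" by (simp add: rel1 m_assoc)
  also have "\<dots> = A \<otimes> B \<otimes> (inv B \<otimes> S)" by (simp add: invB_SB)
  also have "\<dots> = A \<otimes> S" by (simp add: m_assoc)
  finally show ?thesis by simp
qed

lemma d1': "A \<otimes> inv S = inv S \<otimes> A \<otimes> B"
proof -
  have "inv S \<otimes> A \<otimes> B = inv S \<otimes> (A \<otimes> B \<otimes> S) \<otimes> inv S" by (simp add: m_assoc)
  also have "\<dots> = inv S \<otimes> (S \<otimes> A) \<otimes> inv S" by (simp add: rel1)
  also have "\<dots> = A \<otimes> inv S" by (simp add: m_assoc)
  finally show ?thesis by simp
qed

lemma d2: "inv A \<otimes> S = S \<otimes> B \<otimes> inv A"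
proof -
  have "S \<otimes> B \<otimes> inv A = inv A \<otimes> (A \<otimes> S) \<otimes> B \<otimes> inv A" by (simp add: m_assoc)
  also have "\<dots> = inv A \<otimes> (S \<otimes> A \<otimes> inv B) \<otimes> B \<otimes> inv A" by (simp add: d1)
  also have "\<dots> = inv A \<otimes> S" by (simp add: m_assoc)
  finally show ?thesis by simp
qed

lemma SBpow: "B [^] (n::int) \<otimes> S = S \<otimes> B [^] n"
  by (rule comm_int_pow) (simp_all add: rel2)

lemma SpowB: "S [^] (n::int) \<otimes> B = B \<otimes> S [^] n"
  by (rule comm_int_pow) (simp_all add: rel2)

lemma Bneg1: "B [^] (-1::int) = inv B" by (simp add: int_pow_neg)

lemma d4: "A \<otimes> S [^] (k::int) = S [^] k \<otimes> A \<otimes> B [^] (- k)"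
proof (induction k rule: int_induct[of _ 0])
  case base then show ?case by simp
next
  case (step1 i)
  have sp: "S [^] (i + 1) = S [^] i \<otimes> S" using int_pow_mult[of S i 1] by simp
  have bp: "B [^] (- (i + 1)) = inv B \<otimes> B [^] (- i)"
    using int_pow_mult[of B "-1" "-i"] by (simp add: Bneg1 algebra_simps)
  have "A \<otimes> S [^] (i + 1) = A \<otimes> S [^] i \<otimes> S" by (simp add: sp m_assoc)
  also have "\<dots> = S [^] i \<otimes> A \<otimes> (B [^] (- i) \<otimes> S)" by (simp add: step1 m_assoc)
  also have "\<dots> = S [^] i \<otimes> (A \<otimes> S) \<otimes> B [^] (- i)" by (simp add: SBpow m_assoc)
  also have "\<dots> = S [^] i \<otimes> (S \<otimes> A \<otimes> inv B) \<otimes> B [^] (- i)" by (simp add: d1)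
  also have "\<dots> = S [^] (i + 1) \<otimes> A \<otimes> B [^] (- (i + 1))" unfolding sp bp by (simp add: m_assoc)
  finally show ?case .
next
  case (step2 i)
  have sp: "S [^] (i - 1) = S [^] i \<otimes> inv S" using int_pow_mult[of S i "-1"] by (simp add: int_pow_neg)
  have bp: "B [^] (- (i - 1)) = B \<otimes> B [^] (- i)"
    using int_pow_mult[of B "1" "-i"] by (simp add: algebra_simps)
  have "A \<otimes> S [^] (i - 1) = A \<otimes> S [^] i \<otimes> inv S" by (simp add: sp m_assoc)
  also have "\<dots> = S [^] i \<otimes> A \<otimes> (B [^] (- i) \<otimes> inv S)" by (simp add: step2 m_assoc)
  also have "\<dots> = S [^] i \<otimes> (A \<otimes> inv S) \<otimes> B [^] (- i)"
    using comm_inv_left[OF S_c int_pow_closed[OF B_c] SBpow[symmetric]] by (simp add: m_assoc)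
  also have "\<dots> = S [^] i \<otimes> (inv S \<otimes> A \<otimes> B) \<otimes> B [^] (- i)" by (simp add: d1')
  also have "\<dots> = S [^] (i - 1) \<otimes> A \<otimes> B [^] (- (i - 1))" unfolding sp bp by (simp add: m_assoc)
  finally show ?case .
qed


lemma invB_W: "inv B \<otimes> W (n, L) = W (n - 1, L)"
  using W_bm[of "-1" "(n, L)"] by (simp add: Bneg1 bm_def)

lemma W_psi: "W (m, L) \<otimes> S = S \<otimes> W (m + hn L, psiL L)"
proof (induction L arbitrary: m)
  case Nil then show ?case by (simp add: SBpow)
next
  case (Cons y L)
  obtain e m' where y: "y = (e, m')" by force
  have "W (m, (e, m') # L) \<otimes> S = B [^] m \<otimes> (Ae e \<otimes> (W (m', L) \<otimes> S))" by (simp add: m_assoc)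
  also have "\<dots> = B [^] m \<otimes> (Ae e \<otimes> (S \<otimes> W (m' + hn L, psiL L)))" by (simp add: Cons)
  also have "\<dots> = S \<otimes> W (m + hn ((e, m') # L), psiL ((e, m') # L))"
  proof (cases e)
    case True
    have "B [^] m \<otimes> (A \<otimes> (S \<otimes> W (m' + hn L, psiL L))) = B [^] m \<otimes> ((A \<otimes> S) \<otimes> W (m' + hn L, psiL L))"
      by (simp add: m_assoc)
    also have "\<dots> = B [^] m \<otimes> (S \<otimes> A \<otimes> (inv B \<otimes> W (m' + hn L, psiL L)))" by (simp add: d1 m_assoc)
    also have "\<dots> = (B [^] m \<otimes> S) \<otimes> A \<otimes> W (m' + hn L - 1, psiL L)" by (simp add: invB_W m_assoc)
    also have "\<dots> = S \<otimes> (B [^] m \<otimes> A \<otimes> W (m' + hn L - 1, psiL L))" by (simp add: SBpow m_assoc)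
    finally show ?thesis using True by (simp add: Ae_def)
  next
    case False
    have "B [^] m \<otimes> (inv A \<otimes> (S \<otimes> W (m' + hn L, psiL L))) = B [^] m \<otimes> ((inv A \<otimes> S) \<otimes> W (m' + hn L, psiL L))"
      by (simp add: m_assoc)
    also have "\<dots> = (B [^] m \<otimes> S) \<otimes> (B \<otimes> inv A \<otimes> W (m' + hn L, psiL L))" by (simp add: d2 m_assoc)
    also have "\<dots> = S \<otimes> ((B [^] m \<otimes> B) \<otimes> inv A \<otimes> W (m' + hn L, psiL L))" by (simp add: SBpow m_assoc)
    also have "B [^] m \<otimes> B = B [^] (m + 1)" using int_pow_mult[of B m 1] by simp
    finally show ?thesis using False by (simp add: Ae_def)
  qed
  finally show ?case using y by simp
qed

lemma act_inv: "g \<in> carrier G \<Longrightarrow> redX y \<Longrightarrow> act (inv g) (act g y) = y"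
  by (metis act_mult act_one inv_closed l_inv)

lemma act_Ai: "redX x \<Longrightarrow> act (inv A) x = xai x"
  by (metis A_c act_A act_inv x_inv(1) x_red(2))

lemma act_Bnat: "redX x \<Longrightarrow> act (B [^] (k::nat)) x = (bm (int k) (fst x), snd x)"
proof (induction k arbitrary: x)
  case 0 then show ?case by (simp add: act_one bm_def)
next
  case (Suc k)
  have "act (B [^] Suc k) x = act (B [^] k) (act B x)" using Suc by (simp add: act_mult)
  also have "\<dots> = act (B [^] k) (xb x)" using Suc by (simp add: act_B)
  also have "\<dots> = (bm (int k) (fst (xb x)), snd (xb x))" using Suc x_red(3) by blast
  finally show ?case by (simp add: xb_def add.commute)
qed

lemma act_Bpow: "redX x \<Longrightarrow> act (B [^] (n::int)) x = (bm n (fst x), snd x)"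
proof (cases "n < 0")
  case True
  assume r: "redX x"
  have e: "B [^] n = inv (B [^] nat (- n))" using True by (simp add: int_pow_def2)
  have r2: "redX (bm n (fst x), snd x)" using r by (simp add: redX_def)
  have "act (B [^] nat (- n)) (bm n (fst x), snd x) = x" using act_Bnat[OF r2] True by (simp add: bm_def)
  then show ?thesis unfolding e using act_inv[OF _ r2, of "B [^] nat (- n)"] by simp
next
  case False
  assume r: "redX x"
  have e: "B [^] n = B [^] nat n" using False by (simp add: int_pow_def2)
  show ?thesis unfolding e using act_Bnat[OF r] False by simp
qed

lemma act_W: "red_l L \<Longrightarrow> act (W (m, L)) ((0, []), 0) = ((m, L), 0)"
proof (induction L arbitrary: m)
  case Nil then show ?case by (simp add: act_Bpow redX_def bm_def)
next
  case (Cons y L)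
  obtain e m' where y: "y = (e, m')" by force
  have rL: "red_l L" using Cons.prems red_l_tl by blast
  have r0: "redX ((0, []), 0)" by (simp add: redX_def)
  have ih: "act (W (m', L)) ((0, []), 0) = ((m', L), 0)" using Cons.IH rL by simp
  have rm: "redX ((m', L), 0)" using rL by (simp add: redX_def)
  have ae: "act (Ae e) ((m', L), 0) = ((0, (e, m') # L), 0)"
    using Cons.prems y am_noc[of e m' L] rm
    by (cases e) (auto simp: Ae_def act_A act_Ai xa_def xai_def)
  have "act (W (m, y # L)) ((0, []), 0) = act (B [^] m) (act (Ae e) (act (W (m', L)) ((0, []), 0)))"
    using y r0 by (simp add: act_mult act_red)
  also have "\<dots> = ((m, y # L), 0)"
    using ih ae y Cons.prems by (simp add: act_Bpow redX_def bm_def)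
  finally show ?case .
qed

lemma W_inj: "red_l L1 \<Longrightarrow> red_l L2 \<Longrightarrow> W (m1, L1) = W (m2, L2) \<Longrightarrow> m1 = m2 \<and> L1 = L2"
  by (metis act_W prod.inject)

lemma el_A: "A \<otimes> elem x = elem (xa x)"
proof -
  have "A \<otimes> elem x = (A \<otimes> S [^] snd x) \<otimes> W (fst x)" by (simp add: elem_def m_assoc)
  also have "\<dots> = S [^] snd x \<otimes> (A \<otimes> (B [^] (- snd x) \<otimes> W (fst x)))" by (simp add: d4 m_assoc)
  also have "\<dots> = elem (xa x)" by (simp add: elem_def xa_def W_am W_bm Ae_def)
  finally show ?thesis .
qed

lemma el_B: "B \<otimes> elem x = elem (xb x)"
proof -
  have "B \<otimes> elem x = (B \<otimes> S [^] snd x) \<otimes> W (fst x)" by (simp add: elem_def m_assoc)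
  also have "\<dots> = (S [^] snd x \<otimes> B) \<otimes> W (fst x)" by (simp only: SpowB)
  also have "\<dots> = S [^] snd x \<otimes> (B \<otimes> W (fst x))" by (simp add: m_assoc)
  also have "\<dots> = elem (xb x)" by (simp add: elem_def xb_def W_bm)
  finally show ?thesis .
qed

lemma el_S: "S \<otimes> elem x = elem (xs x)"
proof -
  have "S \<otimes> S [^] snd x = S [^] (snd x + 1)" using int_pow_mult[of S 1 "snd x"] by (simp add: add.commute)
  then show ?thesis by (simp add: elem_def xs_def m_assoc[symmetric])
qed

lemma el_inv:
  assumes "g \<in> carrier G" "\<And>x. g \<otimes> elem x = elem (f x)" "f (h x) = x"
  shows "inv g \<otimes> elem x = elem (h x)"
proof -
  have "inv g \<otimes> elem x = inv g \<otimes> (g \<otimes> elem (h x))" using assms by simp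
  also have "\<dots> = elem (h x)" using assms(1) by simp
  finally show ?thesis .
qed

lemma el_Ai: "redX x \<Longrightarrow> inv A \<otimes> elem x = elem (xai x)"
  by (rule el_inv[OF A_c el_A x_inv(1)])

lemma el_Bi: "inv B \<otimes> elem x = elem (xbi x)"
  by (rule el_inv[OF B_c el_B x_inv(3)])

lemma el_Si: "inv S \<otimes> elem x = elem (xsi x)"
  by (rule el_inv[OF S_c el_S x_inv(5)])

abbreviation "Hgens \<equiv> {A \<otimes> B \<otimes> inv A, B, S}"

lemma Hgens_c: "Hgens \<subseteq> carrier G" by simp

lemma H_sub: "subgroup (generate G Hgens) G"
  by (rule generate_is_subgroup[OF Hgens_c])

lemma W_alt: "altL L \<Longrightarrow> W (m, L) \<in> generate G Hgens"
proof (induction L arbitrary: m rule: induct_list012)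
  case 1
  have "B \<in> generate G Hgens" by (rule generate.incl) simp
  then show ?case by (simp add: subgroup_int_pow_closed[OF H_sub])
next
  case (2 x) then show ?case by simp
next
  case (3 x y zs)
  obtain e1 m1 where x: "x = (e1, m1)" by force
  obtain e2 m2 where y: "y = (e2, m2)" by force
  have e: "e1" "\<not> e2" "altL zs" using 3(3) x y by auto
  have g1: "B [^] m \<in> generate G Hgens"
    by (rule subgroup_int_pow_closed[OF H_sub]) (rule generate.incl, simp)
  have g2: "(A \<otimes> B \<otimes> inv A) [^] m1 \<in> generate G Hgens"
    by (rule subgroup_int_pow_closed[OF H_sub]) (rule generate.incl, simp)
  have g3: "W (m2, zs) \<in> generate G Hgens" using 3(1) e by simp
  have cp: "(A \<otimes> B \<otimes> inv A) [^] m1 = A \<otimes> B [^] m1 \<otimes> inv A" by (rule conj_int_pow) simp_all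
  have "W (m, x # y # zs) = B [^] m \<otimes> (A \<otimes> B \<otimes> inv A) [^] m1 \<otimes> W (m2, zs)"
    unfolding cp using x y e by (simp add: Ae_def m_assoc)
  then show ?case using g1 g2 g3 by (simp add: subgroup.m_closed[OF H_sub])
qed

lemma main_incl:
  assumes r: "redX x" and c: "elem x \<otimes> S = S \<otimes> elem x"
  shows "elem x \<in> generate G Hgens"
proof -
  obtain m L k where x: "x = ((m, L), k)" by (metis prod.collapse)
  have rL: "red_l L" using r x by (simp add: redX_def)
  have "S [^] k \<otimes> (W (m, L) \<otimes> S) = S [^] k \<otimes> (S \<otimes> W (m, L))"
  proof -
    have "S [^] k \<otimes> (W (m, L) \<otimes> S) = elem x \<otimes> S" using x by (simp add: elem_def m_assoc)
    also have "\<dots> = S \<otimes> elem x" by (rule c)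
    also have "\<dots> = (S \<otimes> S [^] k) \<otimes> W (m, L)" using x by (simp add: elem_def m_assoc)
    also have "S \<otimes> S [^] k = S [^] k \<otimes> S" by (rule comm_int_pow[symmetric]) simp_all
    finally show ?thesis by (simp add: m_assoc)
  qed
  then have "W (m, L) \<otimes> S = S \<otimes> W (m, L)" by simp
  then have "S \<otimes> W (m + hn L, psiL L) = S \<otimes> W (m, L)" by (simp add: W_psi)
  then have "W (m + hn L, psiL L) = W (m, L)" by simp
  then have "m + hn L = m \<and> psiL L = L" using W_inj psiL_red rL by blast
  then have "altL L" using psiL_fix_alt by simp
  then have "W (m, L) \<in> generate G Hgens" by (rule W_alt)
  moreover have "S [^] k \<in> generate G Hgens"
    by (rule subgroup_int_pow_closed[OF H_sub]) (rule generate.incl, simp)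
  ultimately show ?thesis using x by (simp add: elem_def subgroup.m_closed[OF H_sub])
qed

lemma conjAB_comm: "A \<otimes> B \<otimes> inv A \<in> centraliser G S"
proof -
  have "A \<otimes> B \<otimes> inv A \<otimes> S = A \<otimes> B \<otimes> (inv A \<otimes> S)" by (simp add: m_assoc)
  also have "\<dots> = A \<otimes> (B \<otimes> S) \<otimes> B \<otimes> inv A" by (simp add: d2 m_assoc)
  also have "\<dots> = (A \<otimes> S) \<otimes> B \<otimes> B \<otimes> inv A" by (simp add: rel2[symmetric] m_assoc)
  also have "\<dots> = S \<otimes> (A \<otimes> B \<otimes> inv A)" by (simp add: d1 m_assoc)
  finally show ?thesis by (simp add: centraliser_def)
qed

theorem centraliser_S:
  assumes surj: "\<And>g. g \<in> carrier G \<Longrightarrow> \<exists>x. redX x \<and> g = elem x"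
  shows "centraliser G S = generate G Hgens"
proof
  show "centraliser G S \<subseteq> generate G Hgens"
  proof
    fix g assume g: "g \<in> centraliser G S"
    then have gc: "g \<in> carrier G" "g \<otimes> S = S \<otimes> g" by (auto simp: centraliser_def)
    obtain x where x: "redX x" "g = elem x" using surj[OF gc(1)] by blast
    show "g \<in> generate G Hgens" using main_incl[OF x(1)] gc(2) x(2) by simp
  qed
next
  have "Hgens \<subseteq> centraliser G S"
    using conjAB_comm by (auto simp: centraliser_def rel2)
  then show "generate G Hgens \<subseteq> centraliser G S"
    by (rule generate_subgroup_incl[OF _ centraliser_subgroup[OF S_c]])
qed

end



context kmodel begin

lemma surj_step:
  assumes "redX x"
  shows "\<exists>y. redX y \<and> A \<otimes> elem x = elem y" "\<exists>y. redX y \<and> inv A \<otimes> elem x = elem y"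
    "\<exists>y. redX y \<and> B \<otimes> elem x = elem y" "\<exists>y. redX y \<and> inv B \<otimes> elem x = elem y"
    "\<exists>y. redX y \<and> S \<otimes> elem x = elem y" "\<exists>y. redX y \<and> inv S \<otimes> elem x = elem y"
proof -
  show "\<exists>y. redX y \<and> A \<otimes> elem x = elem y" using el_A x_red(1)[OF assms] by blast
  show "\<exists>y. redX y \<and> inv A \<otimes> elem x = elem y" using el_Ai[OF assms] x_red(2)[OF assms] by blast
  show "\<exists>y. redX y \<and> B \<otimes> elem x = elem y" using el_B x_red(3)[OF assms] by blast
  show "\<exists>y. redX y \<and> inv B \<otimes> elem x = elem y" using el_Bi x_red(4)[OF assms] by blast
  show "\<exists>y. redX y \<and> S \<otimes> elem x = elem y" using el_S x_red(5)[OF assms] by blast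
  show "\<exists>y. redX y \<and> inv S \<otimes> elem x = elem y" using el_Si x_red(6)[OF assms] by blast
qed

lemma elem0: "elem ((0, []), 0) = \<one>" by (simp add: elem_def)

end

section \<open>The group K\<close>

fun actK :: "Kgen \<times> bool \<Rightarrow> xel \<Rightarrow> xel" where
  "actK (Ka, b) = (if b then xai else xa)"
| "actK (Kb, b) = (if b then xbi else xb)"
| "actK (Ks, b) = (if b then xsi else xs)"

lemma actK_red: "redX x \<Longrightarrow> redX (actK t x)"
  by (cases t; cases "fst t"; cases "snd t") (auto simp: x_red)

lemma actK_canc: "redX x \<Longrightarrow> actK (g, b) (actK (g, \<not> b) x) = x"
  by (cases g; cases b) (auto simp: x_inv)

lemma actK_rels: "(l, r) \<in> K_rels \<Longrightarrow> redX x \<Longrightarrow> actw actK l x = actw actK r x"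
  by (auto simp: K_rels_def xdefs bm_def algebra_simps)

definition gK where "gK = gact K_rels actK"

lemma gK_wclass: "redX x \<Longrightarrow> gK (wclass K_rels w) x = actw actK w x"
  unfolding gK_def by (rule gact_wclass[of redX actK, OF actK_red actK_canc actK_rels])

lemma K_group: "group K_grp" by (simp add: K_grp_def pres_group_is_group)

lemma K_mult: "wclass K_rels u \<otimes>\<^bsub>K_grp\<^esub> wclass K_rels v = wclass K_rels (u @ v)"
  by (simp add: K_grp_def pres_group_mult)

lemma K_carrier: "carrier K_grp = range (wclass K_rels)"
  by (simp add: K_grp_def pres_group_carrier)

lemma K_one: "\<one>\<^bsub>K_grp\<^esub> = wclass K_rels []"
  by (simp add: K_grp_def pres_group_one)

lemma K_rel1: "pres_eqv K_rels [(Ks, False), (Ka, False)] [(Ka, False), (Kb, False), (Ks, False)]"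
proof -
  have 1: "pres_eqv K_rels ([(Ks, False), (Ka, False)] @ [(Ks, True), (Ks, \<not> True)] @ []) ([(Ks, False), (Ka, False)] @ [])"
    by (rule pres_eqv.cancel)
  have 2: "pres_eqv K_rels ([] @ [(Ks, False), (Ka, False), (Ks, True)] @ [(Ks, False)]) ([] @ [(Ka, False), (Kb, False)] @ [(Ks, False)])"
    by (rule pres_eqv.rel) (simp add: K_rels_def)
  show ?thesis using 1 2 by (auto intro: pres_eqv.trans pres_eqv.sym)
qed

lemma K_rel2: "pres_eqv K_rels [(Ks, False), (Kb, False)] [(Kb, False), (Ks, False)]"
proof -
  have 1: "pres_eqv K_rels ([(Ks, False), (Kb, False)] @ [(Ks, True), (Ks, \<not> True)] @ []) ([(Ks, False), (Kb, False)] @ [])"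
    by (rule pres_eqv.cancel)
  have 2: "pres_eqv K_rels ([] @ [(Ks, False), (Kb, False), (Ks, True)] @ [(Ks, False)]) ([] @ [(Kb, False)] @ [(Ks, False)])"
    by (rule pres_eqv.rel) (simp add: K_rels_def)
  show ?thesis using 1 2 by (auto intro: pres_eqv.trans pres_eqv.sym)
qed

interpretation K: kmodel K_grp "gen K_rels Ka" "gen K_rels Kb" "gen K_rels Ks" gK
proof -
  interpret group K_grp by (rule K_group)
  show "kmodel K_grp (gen K_rels Ka) (gen K_rels Kb) (gen K_rels Ks) gK"
  proof (unfold_locales)
    show "gen K_rels Ka \<in> carrier K_grp" "gen K_rels Kb \<in> carrier K_grp" "gen K_rels Ks \<in> carrier K_grp"
      by (simp_all add: K_grp_def)
    show "gen K_rels Ks \<otimes>\<^bsub>K_grp\<^esub> gen K_rels Ka = gen K_rels Ka \<otimes>\<^bsub>K_grp\<^esub> gen K_rels Kb \<otimes>\<^bsub>K_grp\<^esub> gen K_rels Ks"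
      using K_rel1 by (simp add: gen_def K_mult wclass_eq_iff)
    show "gen K_rels Ks \<otimes>\<^bsub>K_grp\<^esub> gen K_rels Kb = gen K_rels Kb \<otimes>\<^bsub>K_grp\<^esub> gen K_rels Ks"
      using K_rel2 by (simp add: gen_def K_mult wclass_eq_iff)
    fix g h x
    assume g: "g \<in> carrier K_grp" and h: "h \<in> carrier K_grp" and x: "redX x"
    obtain w v where w: "g = wclass K_rels w" and v: "h = wclass K_rels v" using g h K_carrier by auto
    show "gK (g \<otimes>\<^bsub>K_grp\<^esub> h) x = gK g (gK h x)"
      using x by (simp add: w v K_mult gK_wclass actw_P[of redX actK, OF actK_red])
  next
    fix g x assume g: "g \<in> carrier K_grp" and x: "redX x"
    obtain w where w: "g = wclass K_rels w" using g K_carrier by auto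
    show "redX (gK g x)" using x by (simp add: w gK_wclass actw_P[of redX actK, OF actK_red])
  next
    fix x assume x: "redX x"
    show "gK \<one>\<^bsub>K_grp\<^esub> x = x" using x by (simp add: K_one gK_wclass)
    show "gK (gen K_rels Ka) x = xa x" "gK (gen K_rels Kb) x = xb x" "gK (gen K_rels Ks) x = xs x"
      using x by (simp_all add: gen_def gK_wclass)
  qed
qed

lemma K_surj: "g \<in> carrier K_grp \<Longrightarrow> \<exists>x. redX x \<and> g = K.elem x"
proof -
  assume "g \<in> carrier K_grp"
  then obtain w where w: "g = wclass K_rels w" using K_carrier by auto
  have "\<exists>x. redX x \<and> wclass K_rels w = K.elem x"
  proof (induction w)
    case Nil
    show ?case by (rule exI[of _ "((0, []), 0)"]) (simp add: redX_def K.elem0 K_one)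
  next
    case (Cons t w)
    then obtain x where x: "redX x" "wclass K_rels w = K.elem x" by blast
    obtain g b where t: "t = (g, b)" by force
    have e: "wclass K_rels (t # w) = (if b then inv\<^bsub>K_grp\<^esub> (gen K_rels g) else gen K_rels g) \<otimes>\<^bsub>K_grp\<^esub> K.elem x"
      using wclass_Cons[of K_rels t w] t x(2) by (simp add: K_grp_def)
    show ?case unfolding e using K.surj_step[OF x(1)] by (cases g; cases b) auto
  qed
  then show ?thesis using w by simp
qed

theorem K_centraliser:
  "centraliser K_grp (gen K_rels Ks)
     = generate K_grp
         {gen K_rels Ka \<otimes>\<^bsub>K_grp\<^esub> gen K_rels Kb \<otimes>\<^bsub>K_grp\<^esub> inv\<^bsub>K_grp\<^esub> gen K_rels Ka,
          gen K_rels Kb, gen K_rels Ks}"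
  by (rule K.centraliser_S[OF K_surj])




section \<open>The group L\<close>

fun actL :: "Lgen \<times> bool \<Rightarrow> xel \<Rightarrow> xel" where
  "actL (Lc, b) = (if b then xsi else xs)"
| "actL (Lq, b) = (if b then (\<lambda>x. xsi (xa x)) else (\<lambda>x. xai (xs x)))"

lemma actL_red: "redX x \<Longrightarrow> redX (actL t x)"
  by (cases t; cases "fst t"; cases "snd t") (auto simp: x_red)

lemma actL_canc: "redX x \<Longrightarrow> actL (g, b) (actL (g, \<not> b) x) = x"
  by (cases g; cases b) (auto simp: x_inv x_red)

lemma am_inv_T: "red_l (snd u) \<Longrightarrow> am False (am True u) = u"
  using am_inv[of u True] by simp

lemma actL_rels: "(l, r) \<in> L_rels \<Longrightarrow> redX x \<Longrightarrow> actw actL l x = actw actL r x"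
proof -
  assume lr: "(l, r) \<in> L_rels" and x: "redX x"
  obtain u k where xu: "x = (u, k)" by (cases x)
  have r: "red_l (snd u)" using x xu by (simp add: redX_def)
  have "actw actL l x = ((fst u + 1, snd u), k + 2)" using lr r xu
    by (simp add: L_rels_def xdefs am_inv_T) (simp add: bm_def)
  moreover have "actw actL r x = ((fst u + 1, snd u), k + 2)" using lr r xu
    by (simp add: L_rels_def xdefs am_inv_T) (simp add: bm_def)
  ultimately show ?thesis by simp
qed




declare wclass_inv_letter [simp del]


definition gL where "gL = gact L_rels actL"

lemma gL_wclass: "redX x \<Longrightarrow> gL (wclass L_rels w) x = actw actL w x"
  unfolding gL_def by (rule gact_wclass[of redX actL, OF actL_red actL_canc actL_rels])

lemma L_group: "group L_grp" by (simp add: L_grp_def pres_group_is_group)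

lemma L_mult: "wclass L_rels u \<otimes>\<^bsub>L_grp\<^esub> wclass L_rels v = wclass L_rels (u @ v)"
  by (simp add: L_grp_def pres_group_mult)

lemma L_carrier: "carrier L_grp = range (wclass L_rels)"
  by (simp add: L_grp_def pres_group_carrier)

lemma L_one: "\<one>\<^bsub>L_grp\<^esub> = wclass L_rels []"
  by (simp add: L_grp_def pres_group_one)

abbreviation "LC \<equiv> gen L_rels Lc"
abbreviation "LQ \<equiv> gen L_rels Lq"
definition "AL = wclass L_rels [(Lc, False), (Lq, True)]"
definition "BL = wclass L_rels [(Lq, False), (Lc, False), (Lq, True), (Lc, True)]"

lemma L_invletter: "wclass L_rels [(x, True)] = inv\<^bsub>L_grp\<^esub> gen L_rels x"
  by (simp add: L_grp_def wclass_inv_letter)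

lemma L_inv_w: "inv\<^bsub>L_grp\<^esub> (wclass L_rels [(x, False)]) = wclass L_rels [(x, True)]"
  by (simp add: L_invletter gen_def)

lemma L_gen_c [simp]: "gen L_rels x \<in> carrier L_grp" by (simp add: L_grp_def)

lemma L_wclass_c [simp]: "wclass L_rels w \<in> carrier L_grp" by (simp add: L_grp_def)

lemma L_split: "wclass L_rels (t # w) = wclass L_rels [t] \<otimes>\<^bsub>L_grp\<^esub> wclass L_rels w"
  by (simp add: L_mult)

lemma AL_eq: "AL = LC \<otimes>\<^bsub>L_grp\<^esub> inv\<^bsub>L_grp\<^esub> LQ"
  unfolding AL_def by (subst L_split) (simp add: L_invletter gen_def)

lemma BL_eq: "BL = LQ \<otimes>\<^bsub>L_grp\<^esub> LC \<otimes>\<^bsub>L_grp\<^esub> inv\<^bsub>L_grp\<^esub> LQ \<otimes>\<^bsub>L_grp\<^esub> inv\<^bsub>L_grp\<^esub> LC"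
proof -
  interpret group L_grp by (rule L_group)
  have "BL = LQ \<otimes>\<^bsub>L_grp\<^esub> (LC \<otimes>\<^bsub>L_grp\<^esub> (inv\<^bsub>L_grp\<^esub> LQ \<otimes>\<^bsub>L_grp\<^esub> inv\<^bsub>L_grp\<^esub> LC))"
    unfolding BL_def
    by (subst L_split, subst L_split, subst L_split) (simp add: L_invletter gen_def)
  then show ?thesis by (simp add: m_assoc)
qed

lemma L_rel: "LC \<otimes>\<^bsub>L_grp\<^esub> (LQ \<otimes>\<^bsub>L_grp\<^esub> LC \<otimes>\<^bsub>L_grp\<^esub> inv\<^bsub>L_grp\<^esub> LQ)
   = (LQ \<otimes>\<^bsub>L_grp\<^esub> LC \<otimes>\<^bsub>L_grp\<^esub> inv\<^bsub>L_grp\<^esub> LQ) \<otimes>\<^bsub>L_grp\<^esub> LC"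
proof -
  interpret group L_grp by (rule L_group)
  have "pres_eqv L_rels ([] @ [(Lc, False), (Lq, False), (Lc, False), (Lq, True)] @ [])
                         ([] @ [(Lq, False), (Lc, False), (Lq, True), (Lc, False)] @ [])"
    by (rule pres_eqv.rel) (simp add: L_rels_def)
  then have "wclass L_rels [(Lc, False), (Lq, False), (Lc, False), (Lq, True)]
           = wclass L_rels [(Lq, False), (Lc, False), (Lq, True), (Lc, False)]"
    by (simp add: wclass_eq_iff)
  then have "LC \<otimes>\<^bsub>L_grp\<^esub> (LQ \<otimes>\<^bsub>L_grp\<^esub> (LC \<otimes>\<^bsub>L_grp\<^esub> inv\<^bsub>L_grp\<^esub> LQ))
       = LQ \<otimes>\<^bsub>L_grp\<^esub> (LC \<otimes>\<^bsub>L_grp\<^esub> (inv\<^bsub>L_grp\<^esub> LQ \<otimes>\<^bsub>L_grp\<^esub> LC))"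
    by (simp add: gen_def L_inv_w L_mult)
  then show ?thesis by (simp add: m_assoc)
qed

interpretation L: kmodel L_grp AL BL LC gL
proof -
  interpret group L_grp by (rule L_group)
  show "kmodel L_grp AL BL LC gL"
  proof (unfold_locales)
    show "AL \<in> carrier L_grp" "BL \<in> carrier L_grp" "LC \<in> carrier L_grp"
      by (simp_all add: AL_def BL_def)
    show "LC \<otimes>\<^bsub>L_grp\<^esub> AL = AL \<otimes>\<^bsub>L_grp\<^esub> BL \<otimes>\<^bsub>L_grp\<^esub> LC"
      by (simp add: AL_eq BL_eq m_assoc)
    have "LC \<otimes>\<^bsub>L_grp\<^esub> BL = (LC \<otimes>\<^bsub>L_grp\<^esub> (LQ \<otimes>\<^bsub>L_grp\<^esub> LC \<otimes>\<^bsub>L_grp\<^esub> inv\<^bsub>L_grp\<^esub> LQ)) \<otimes>\<^bsub>L_grp\<^esub> inv\<^bsub>L_grp\<^esub> LC"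
      by (simp add: BL_eq m_assoc)
    also have "\<dots> = BL \<otimes>\<^bsub>L_grp\<^esub> LC" unfolding L_rel by (simp add: BL_eq m_assoc)
    finally show "LC \<otimes>\<^bsub>L_grp\<^esub> BL = BL \<otimes>\<^bsub>L_grp\<^esub> LC" .
    fix g h x
    assume g: "g \<in> carrier L_grp" and h: "h \<in> carrier L_grp" and x: "redX x"
    obtain w v where w: "g = wclass L_rels w" and v: "h = wclass L_rels v" using g h L_carrier by auto
    show "gL (g \<otimes>\<^bsub>L_grp\<^esub> h) x = gL g (gL h x)"
      using x by (simp add: w v L_mult gL_wclass actw_P[of redX actL, OF actL_red])
  next
    fix g x assume g: "g \<in> carrier L_grp" and x: "redX x"
    obtain w where w: "g = wclass L_rels w" using g L_carrier by auto
    show "redX (gL g x)" using x by (simp add: w gL_wclass actw_P[of redX actL, OF actL_red])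
  next
    fix x assume x: "redX x"
    obtain u k where xu: "x = (u, k)" by (cases x)
    have r: "red_l (snd u)" using x xu by (simp add: redX_def)
    show "gL \<one>\<^bsub>L_grp\<^esub> x = x" using x by (simp add: L_one gL_wclass)
    show "gL AL x = xa x" using x by (simp add: AL_def gL_wclass x_inv x_red)
    show "gL BL x = xb x" using x xu r
      by (simp add: BL_def gL_wclass xdefs am_inv_T)
    show "gL LC x = xs x"
      using x by (simp_all add: gen_def gL_wclass)
  qed
qed

lemma LQ_eq: "LQ = inv\<^bsub>L_grp\<^esub> AL \<otimes>\<^bsub>L_grp\<^esub> LC"
proof -
  show ?thesis by (simp add: AL_eq L.inv_mult_group L.m_assoc)
qed

lemma LQi_eq: "inv\<^bsub>L_grp\<^esub> LQ = inv\<^bsub>L_grp\<^esub> LC \<otimes>\<^bsub>L_grp\<^esub> AL"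
proof -
  show ?thesis by (simp add: AL_eq L.m_assoc)
qed

lemma L_surj: "g \<in> carrier L_grp \<Longrightarrow> \<exists>x. redX x \<and> g = L.elem x"
proof -
  assume "g \<in> carrier L_grp"
  then obtain w where w: "g = wclass L_rels w" using L_carrier by auto
  have "\<exists>x. redX x \<and> wclass L_rels w = L.elem x"
  proof (induction w)
    case Nil
    show ?case by (rule exI[of _ "((0, []), 0)"]) (simp add: redX_def L.elem0 L_one)
  next
    case (Cons t w)
    then obtain x where x: "redX x" "wclass L_rels w = L.elem x" by blast
    obtain g b where t: "t = (g, b)" by force
    have e: "wclass L_rels (t # w) = (if b then inv\<^bsub>L_grp\<^esub> (gen L_rels g) else gen L_rels g) \<otimes>\<^bsub>L_grp\<^esub> L.elem x"
      using wclass_Cons[of L_rels t w] t x(2) by (simp add: L_grp_def)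
    show ?case
    proof (cases g)
      case Lc then show ?thesis unfolding e using L.surj_step[OF x(1)] by (cases b) auto
    next
      case Lq
      show ?thesis
      proof (cases b)
        case True
        obtain y where y: "redX y" "AL \<otimes>\<^bsub>L_grp\<^esub> L.elem x = L.elem y" using L.surj_step(1)[OF x(1)] by blast
        obtain z where z: "redX z" "inv\<^bsub>L_grp\<^esub> LC \<otimes>\<^bsub>L_grp\<^esub> L.elem y = L.elem z" using L.surj_step(6)[OF y(1)] by blast
        have "wclass L_rels (t # w) = L.elem z" unfolding e using True Lq y z
          by (simp add: LQi_eq L.m_assoc)
        then show ?thesis using z by blast
      next
        case False
        obtain y where y: "redX y" "LC \<otimes>\<^bsub>L_grp\<^esub> L.elem x = L.elem y" using L.surj_step(5)[OF x(1)] by blast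
        obtain z where z: "redX z" "inv\<^bsub>L_grp\<^esub> AL \<otimes>\<^bsub>L_grp\<^esub> L.elem y = L.elem z" using L.surj_step(2)[OF y(1)] by blast
        have "wclass L_rels (t # w) = L.elem z" unfolding e using False Lq y z
          by (simp add: LQ_eq L.m_assoc)
        then show ?thesis using z by blast
      qed
    qed
  qed
  then show ?thesis using w by simp
qed

lemma L_centraliser0:
  "centraliser L_grp LC = generate L_grp {AL \<otimes>\<^bsub>L_grp\<^esub> BL \<otimes>\<^bsub>L_grp\<^esub> inv\<^bsub>L_grp\<^esub> AL, BL, LC}"
  by (rule L.centraliser_S[OF L_surj])




lemma (in group) gen_conj:
  assumes g: "g \<in> carrier G" and T: "T \<subseteq> carrier G" and x: "x \<in> generate G T"
  shows "g \<otimes> x \<otimes> inv g \<in> generate G ((\<lambda>t. g \<otimes> t \<otimes> inv g) ` T)"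
  using x
proof (induction rule: generate.induct)
  case one
  then show ?case using g by (simp add: generate.one)
next
  case (incl h)
  then show ?case by (intro generate.incl) auto
next
  case (inv h)
  have hc: "h \<in> carrier G" using inv T by auto
  have "g \<otimes> inv h \<otimes> inv g = inv (g \<otimes> h \<otimes> inv g)" using g hc by (simp add: inv_mult_group m_assoc)
  then show ?case using inv by (auto intro: generate.inv)
next
  case (eng h1 h2)
  have c1: "h1 \<in> carrier G" using eng(1) T generate_in_carrier by blast
  have c2: "h2 \<in> carrier G" using eng(2) T generate_in_carrier by blast
  have "g \<otimes> (h1 \<otimes> h2) \<otimes> inv g = (g \<otimes> h1 \<otimes> inv g) \<otimes> (g \<otimes> h2 \<otimes> inv g)"
    using g c1 c2 by (simp add: m_assoc)
  then show ?case using eng by (auto intro: generate.eng)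
qed

abbreviation (input) PL :: "int \<Rightarrow> Lgen word set" where "PL i \<equiv> LQ [^]\<^bsub>L_grp\<^esub> i"

lemma c_el_eq: "c_el i = PL i \<otimes>\<^bsub>L_grp\<^esub> LC \<otimes>\<^bsub>L_grp\<^esub> inv\<^bsub>L_grp\<^esub> PL i"
  by (simp add: c_el_def L.int_pow_neg)

lemma c_el_c [simp]: "c_el i \<in> carrier L_grp" by (simp add: c_el_eq)

lemma c_el0: "c_el 0 = LC" by (simp add: c_el_eq)

lemma tau: "PL i \<otimes>\<^bsub>L_grp\<^esub> c_el d \<otimes>\<^bsub>L_grp\<^esub> inv\<^bsub>L_grp\<^esub> PL i = c_el (i + d)"
proof -
  have p: "PL (i + d) = PL i \<otimes>\<^bsub>L_grp\<^esub> PL d" by (simp add: L.int_pow_mult)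
  show ?thesis unfolding c_el_eq p by (simp add: L.m_assoc L.inv_mult_group)
qed

lemma conj_mult: "P \<in> carrier L_grp \<Longrightarrow> x \<in> carrier L_grp \<Longrightarrow> y \<in> carrier L_grp \<Longrightarrow>
  P \<otimes>\<^bsub>L_grp\<^esub> (x \<otimes>\<^bsub>L_grp\<^esub> y) \<otimes>\<^bsub>L_grp\<^esub> inv\<^bsub>L_grp\<^esub> P
  = (P \<otimes>\<^bsub>L_grp\<^esub> x \<otimes>\<^bsub>L_grp\<^esub> inv\<^bsub>L_grp\<^esub> P) \<otimes>\<^bsub>L_grp\<^esub> (P \<otimes>\<^bsub>L_grp\<^esub> y \<otimes>\<^bsub>L_grp\<^esub> inv\<^bsub>L_grp\<^esub> P)"
  by (simp add: L.m_assoc)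

lemma c_comm: "c_el j \<otimes>\<^bsub>L_grp\<^esub> c_el (j + 1) = c_el (j + 1) \<otimes>\<^bsub>L_grp\<^esub> c_el j"
proof -
  have c1: "c_el 1 = LQ \<otimes>\<^bsub>L_grp\<^esub> LC \<otimes>\<^bsub>L_grp\<^esub> inv\<^bsub>L_grp\<^esub> LQ" by (simp add: c_el_eq)
  have base: "c_el 0 \<otimes>\<^bsub>L_grp\<^esub> c_el 1 = c_el 1 \<otimes>\<^bsub>L_grp\<^esub> c_el 0"
    unfolding c1 c_el0 by (rule L_rel)
  have "c_el j \<otimes>\<^bsub>L_grp\<^esub> c_el (j + 1) = PL j \<otimes>\<^bsub>L_grp\<^esub> (c_el 0 \<otimes>\<^bsub>L_grp\<^esub> c_el 1) \<otimes>\<^bsub>L_grp\<^esub> inv\<^bsub>L_grp\<^esub> PL j"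
    by (simp add: conj_mult tau)
  also have "\<dots> = PL j \<otimes>\<^bsub>L_grp\<^esub> (c_el 1 \<otimes>\<^bsub>L_grp\<^esub> c_el 0) \<otimes>\<^bsub>L_grp\<^esub> inv\<^bsub>L_grp\<^esub> PL j"
    by (simp only: base)
  also have "\<dots> = c_el (j + 1) \<otimes>\<^bsub>L_grp\<^esub> c_el j"
    by (simp add: conj_mult tau)
  finally show ?thesis .
qed

abbreviation (input) G0 where "G0 \<equiv> generate L_grp {c_el (-1), c_el 0, c_el 1}"

lemma G0_sub: "subgroup G0 L_grp"
  by (rule L.generate_is_subgroup) simp

lemma gens_in_G0: "{AL \<otimes>\<^bsub>L_grp\<^esub> BL \<otimes>\<^bsub>L_grp\<^esub> inv\<^bsub>L_grp\<^esub> AL, BL, LC} \<subseteq> G0"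
proof -
  have i0: "c_el 0 \<in> G0" "c_el 1 \<in> G0" "c_el (-1) \<in> G0" by (auto intro: generate.incl)
  have cm1: "c_el (-1) = inv\<^bsub>L_grp\<^esub> LQ \<otimes>\<^bsub>L_grp\<^esub> LC \<otimes>\<^bsub>L_grp\<^esub> LQ"
    by (simp add: c_el_eq L.int_pow_neg)
  have c1: "c_el 1 = LQ \<otimes>\<^bsub>L_grp\<^esub> LC \<otimes>\<^bsub>L_grp\<^esub> inv\<^bsub>L_grp\<^esub> LQ" by (simp add: c_el_eq)
  have b: "BL = c_el 1 \<otimes>\<^bsub>L_grp\<^esub> inv\<^bsub>L_grp\<^esub> c_el 0"
    by (simp add: BL_eq c1 c_el0)
  have a: "AL \<otimes>\<^bsub>L_grp\<^esub> BL \<otimes>\<^bsub>L_grp\<^esub> inv\<^bsub>L_grp\<^esub> AL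
      = c_el 0 \<otimes>\<^bsub>L_grp\<^esub> c_el 0 \<otimes>\<^bsub>L_grp\<^esub> inv\<^bsub>L_grp\<^esub> c_el (-1) \<otimes>\<^bsub>L_grp\<^esub> inv\<^bsub>L_grp\<^esub> c_el 0"
    by (simp add: AL_eq BL_eq cm1 c_el0 L.inv_mult_group L.m_assoc)
  have "BL \<in> G0" unfolding b using i0 G0_sub by (simp add: subgroup.m_closed subgroup.m_inv_closed)
  moreover have "AL \<otimes>\<^bsub>L_grp\<^esub> BL \<otimes>\<^bsub>L_grp\<^esub> inv\<^bsub>L_grp\<^esub> AL \<in> G0"
    unfolding a using i0 G0_sub by (simp add: subgroup.m_closed subgroup.m_inv_closed)
  moreover have "LC \<in> G0" using i0 by (simp add: c_el0)
  ultimately show ?thesis by simp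
qed

theorem L_centraliser: "centraliser L_grp (c_el i) = generate L_grp {c_el (i - 1), c_el i, c_el (i + 1)}"
proof
  show "centraliser L_grp (c_el i) \<subseteq> generate L_grp {c_el (i - 1), c_el i, c_el (i + 1)}"
  proof
    fix h assume h: "h \<in> centraliser L_grp (c_el i)"
    then have hc: "h \<in> carrier L_grp" and hcomm: "h \<otimes>\<^bsub>L_grp\<^esub> c_el i = c_el i \<otimes>\<^bsub>L_grp\<^esub> h"
      by (auto simp: centraliser_def)
    define P where "P = PL i"
    have Pc: "P \<in> carrier L_grp" by (simp add: P_def)
    define h' where "h' = inv\<^bsub>L_grp\<^esub> P \<otimes>\<^bsub>L_grp\<^esub> h \<otimes>\<^bsub>L_grp\<^esub> P"
    have h'c: "h' \<in> carrier L_grp" using Pc hc by (simp add: h'_def)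
    have ci: "c_el i = P \<otimes>\<^bsub>L_grp\<^esub> LC \<otimes>\<^bsub>L_grp\<^esub> inv\<^bsub>L_grp\<^esub> P" by (simp add: c_el_eq P_def)
    have "h' \<otimes>\<^bsub>L_grp\<^esub> LC = inv\<^bsub>L_grp\<^esub> P \<otimes>\<^bsub>L_grp\<^esub> (h \<otimes>\<^bsub>L_grp\<^esub> c_el i) \<otimes>\<^bsub>L_grp\<^esub> P"
      using Pc hc by (simp add: h'_def ci L.m_assoc)
    also have "\<dots> = inv\<^bsub>L_grp\<^esub> P \<otimes>\<^bsub>L_grp\<^esub> (c_el i \<otimes>\<^bsub>L_grp\<^esub> h) \<otimes>\<^bsub>L_grp\<^esub> P" by (simp only: hcomm)
    also have "\<dots> = LC \<otimes>\<^bsub>L_grp\<^esub> h'"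
      using Pc hc by (simp add: h'_def ci L.m_assoc)
    finally have "h' \<in> centraliser L_grp LC" using h'c by (simp add: centraliser_def)
    then have "h' \<in> G0" using L_centraliser0 L.generate_subgroup_incl[OF gens_in_G0 G0_sub] by auto
    then have "P \<otimes>\<^bsub>L_grp\<^esub> h' \<otimes>\<^bsub>L_grp\<^esub> inv\<^bsub>L_grp\<^esub> P
        \<in> generate L_grp ((\<lambda>t. P \<otimes>\<^bsub>L_grp\<^esub> t \<otimes>\<^bsub>L_grp\<^esub> inv\<^bsub>L_grp\<^esub> P) ` {c_el (-1), c_el 0, c_el 1})"
      by (intro L.gen_conj Pc) auto
    moreover have "(\<lambda>t. P \<otimes>\<^bsub>L_grp\<^esub> t \<otimes>\<^bsub>L_grp\<^esub> inv\<^bsub>L_grp\<^esub> P) ` {c_el (-1), c_el 0, c_el 1}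
        = {c_el (i - 1), c_el i, c_el (i + 1)}"
      by (simp add: P_def tau)
    moreover have "P \<otimes>\<^bsub>L_grp\<^esub> h' \<otimes>\<^bsub>L_grp\<^esub> inv\<^bsub>L_grp\<^esub> P = h"
      using Pc hc by (simp add: h'_def L.m_assoc)
    ultimately show "h \<in> generate L_grp {c_el (i - 1), c_el i, c_el (i + 1)}" by simp
  qed
next
  have "{c_el (i - 1), c_el i, c_el (i + 1)} \<subseteq> centraliser L_grp (c_el i)"
    using c_comm[of "i - 1"] c_comm[of i] by (auto simp: centraliser_def)
  then show "generate L_grp {c_el (i - 1), c_el i, c_el (i + 1)} \<subseteq> centraliser L_grp (c_el i)"
    by (rule L.generate_subgroup_incl[OF _ L.centraliser_subgroup[OF c_el_c]])
qed

theorem lemma6p2: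
  shows "(\<forall>i::int. centraliser L_grp (c_el i)
            = generate L_grp {c_el (i - 1), c_el i, c_el (i + 1)})
       \<and> centraliser K_grp (gen K_rels Ks)
            = generate K_grp
                {gen K_rels Ka \<otimes>\<^bsub>K_grp\<^esub> gen K_rels Kb \<otimes>\<^bsub>K_grp\<^esub> inv\<^bsub>K_grp\<^esub> gen K_rels Ka,
                 gen K_rels Kb, gen K_rels Ks}"
  using L_centraliser K_centraliser by blast



end
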